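(* Let $T>0$ and let $\mathbb{T}^2=(\mathbb{R}/T\mathbb{Z})\times(\mathbb{R}/2\pi\mathbb{Z})$ with coordinates $(t,x)$ and volume form $dV=dt\wedge dx$. Assume that $\mathcal{R}=\frac{2\pi}{T}$ has irrationality measure equal to $2$. Let \[ M_1=\begin{pmatrix}0&-1&0&0\\1&0&0&0\\0&0&0&1\\0&0&-1&0\end{pmatrix},\qquad M_2=\begin{pmatrix}0&0&1&0\\0&0&0&-1\\-1&0&0&0\\0&1&0&0\end{pmatrix}. \] Let $\widetilde{Z}:\mathbb{R}\times\mathbb{T}^2\to\mathbb{R}^4$ be a smooth map satisfying \[ \partial_s\widetilde{Z}(s,t,x)+M_1\partial_t\widetilde{Z}(s,t,x)+M_2\partial_x\widetilde{Z}(s,t,x)=0 \] for all $(s,t,x)$, with finite energy \[ E(\widetilde{Z})=\int_{-\infty}^{+\infty}\left(\int_{\mathbb{T}^2}|\partial_s\widetilde{Z}(s,t,x)|^2\,dV\right)ds<+\infty, \] and such that for every $s\in\mathbb{R}$ the map $\widetilde{Z}_s:=\widetilde{Z}(s,\cdot,\cdot)$ has mean zero, i.e. $\int_{\mathbb{T}^2}\widetilde{Z}_s\,dV=0$. Then $\lim_{s\to+\infty}\widetilde{Z}_s=0$ in $C^\infty(\mathbb{T}^2,\mathbb{R}^4)$.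
   Context: The irrationality measure of a real number $r$ is the infimum of all $\rho$ for which there exists a constant $c$ such that $\frac{c}{q^\rho}<|r-\frac{p}{q}|$ for all $\frac{p}{q}\in\mathbb{Q}$. The assumption that $\mathcal{R}$ has irrationality measure $2$ is a standing assumption of the section in which the lemma is stated. *)

theory Defs
  imports "HOL-Analysis.Analysis"
begin

text \<open>Irrationality measure: infimum (in the extended reals, so that the empty set
  gives +infinity) of all rho for which some constant c > 0 satisfies
  c / q^rho < |r - p/q| for all p/q with q > 0.\<close>
definition irrationality_measure :: "real \<Rightarrow> ereal" where
  "irrationality_measure r =
     Inf {ereal \<rho> | \<rho>. \<exists>c>0. \<forall>p::int. \<forall>q::int. q > 0 \<longrightarrow>
            c / (real_of_int q) powr \<rho> < \<bar>r - real_of_int p / real_of_int q\<bar>}"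

definition pd_s :: "(real \<Rightarrow> real \<Rightarrow> real \<Rightarrow> real^4) \<Rightarrow> real \<Rightarrow> real \<Rightarrow> real \<Rightarrow> real^4" where
  "pd_s f = (\<lambda>s t x. vector_derivative (\<lambda>\<sigma>. f \<sigma> t x) (at s))"
definition pd_t :: "(real \<Rightarrow> real \<Rightarrow> real \<Rightarrow> real^4) \<Rightarrow> real \<Rightarrow> real \<Rightarrow> real \<Rightarrow> real^4" where
  "pd_t f = (\<lambda>s t x. vector_derivative (\<lambda>\<tau>. f s \<tau> x) (at t))"
definition pd_x :: "(real \<Rightarrow> real \<Rightarrow> real \<Rightarrow> real^4) \<Rightarrow> real \<Rightarrow> real \<Rightarrow> real \<Rightarrow> real^4" where
  "pd_x f = (\<lambda>s t x. vector_derivative (\<lambda>\<xi>. f s t \<xi>) (at x))"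

datatype pdir = Ds | Dt | Dx

fun pd_word :: "pdir list \<Rightarrow> (real \<Rightarrow> real \<Rightarrow> real \<Rightarrow> real^4) \<Rightarrow> (real \<Rightarrow> real \<Rightarrow> real \<Rightarrow> real^4)" where
  "pd_word [] f = f"
| "pd_word (Ds # w) f = pd_s (pd_word w f)"
| "pd_word (Dt # w) f = pd_t (pd_word w f)"
| "pd_word (Dx # w) f = pd_x (pd_word w f)"

definition smooth3 :: "(real \<Rightarrow> real \<Rightarrow> real \<Rightarrow> real^4) \<Rightarrow> bool" where
  "smooth3 f \<longleftrightarrow> (\<forall>w. \<forall>p::real \<times> real \<times> real.
      (\<lambda>(s,t,x). pd_word w f s t x) differentiable (at p))"

definition M1 :: "real^4^4" where
  "M1 = vector [vector [0,-1,0,0], vector [1,0,0,0], vector [0,0,0,1], vector [0,0,-1,0]]"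
definition M2 :: "real^4^4" where
  "M2 = vector [vector [0,0,1,0], vector [0,0,0,-1], vector [-1,0,0,0], vector [0,1,0,0]]"

end

theory Submission
  imports Defs
begin

lemma hvd_inner:
  fixes u v :: "real \<Rightarrow> 'a::real_inner"
  assumes "(u has_vector_derivative u') (at x within S)" "(v has_vector_derivative v') (at x within S)"
  shows "((\<lambda>y. u y \<bullet> v y) has_vector_derivative (u' \<bullet> v x + u x \<bullet> v')) (at x within S)"
  using has_derivative_inner[OF assms[unfolded has_vector_derivative_def]]
  unfolding has_vector_derivative_def
  by (simp add: algebra_simps inner_scaleR_left inner_scaleR_right)

lemma pd_word_snoc:
  "pd_word w (pd_s F) = pd_word (w @ [Ds]) F"
  "pd_word w (pd_t F) = pd_word (w @ [Dt]) F"
  "pd_word w (pd_x F) = pd_word (w @ [Dx]) F"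
proof -
  have "pd_word w (pd_s F) = pd_word (w @ [Ds]) F \<and> pd_word w (pd_t F) = pd_word (w @ [Dt]) F
    \<and> pd_word w (pd_x F) = pd_word (w @ [Dx]) F"
  proof (induction w)
    case (Cons a w) then show ?case by (cases a) simp_all
  qed simp
  then show "pd_word w (pd_s F) = pd_word (w @ [Ds]) F" "pd_word w (pd_t F) = pd_word (w @ [Dt]) F"
    "pd_word w (pd_x F) = pd_word (w @ [Dx]) F" by blast+
qed

lemma smooth3_pd:
  assumes "smooth3 F"
  shows "smooth3 (pd_s F)" "smooth3 (pd_t F)" "smooth3 (pd_x F)"
  using assms unfolding smooth3_def pd_word_snoc by blast+

lemma smooth3_diff:
  assumes "smooth3 F"
  shows "(\<lambda>(s,t,x). F s t x) differentiable (at p)"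
  using assms unfolding smooth3_def by (metis pd_word.simps(1))

lemma smooth3_cont:
  assumes "smooth3 F"
  shows "continuous_on UNIV (\<lambda>p. F (fst p) (fst (snd p)) (snd (snd p)))"
proof -
  have "(\<lambda>p. F (fst p) (fst (snd p)) (snd (snd p))) = (\<lambda>(s,t,x). F s t x)"
    by (auto simp: fun_eq_iff split: prod.splits)
  then show ?thesis
    using smooth3_diff[OF assms] differentiable_imp_continuous_within continuous_at_imp_continuous_on
    by (metis (no_types, lifting))
qed

lemma smooth3_cont_comp:
  assumes "smooth3 F" "continuous_on S a" "continuous_on S b" "continuous_on S c"
  shows "continuous_on S (\<lambda>y. F (a y) (b y) (c y))"
proof -
  have "continuous_on S ((\<lambda>p. F (fst p) (fst (snd p)) (snd (snd p))) \<circ> (\<lambda>y. (a y, b y, c y)))"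
    by (intro continuous_on_compose continuous_intros assms continuous_on_subset[OF smooth3_cont[OF assms(1)]]) auto
  then show ?thesis by (simp add: o_def)
qed

lemma smooth3_ds:
  assumes "smooth3 F"
  shows "((\<lambda>\<sigma>. F \<sigma> t x) has_vector_derivative pd_s F s t x) (at s)"
proof -
  have "((\<lambda>(s,t,x). F s t x) \<circ> (\<lambda>\<sigma>. (\<sigma>,t,x))) differentiable (at s)"
    by (intro differentiable_chain_at smooth3_diff[OF assms]) (auto intro!: derivative_intros)
  then have "(\<lambda>\<sigma>. F \<sigma> t x) differentiable (at s)" by (simp add: o_def)
  then show ?thesis unfolding pd_s_def by (simp add: vector_derivative_works[symmetric])
qed

lemma smooth3_dt:
  assumes "smooth3 F"
  shows "((\<lambda>\<tau>. F s \<tau> x) has_vector_derivative pd_t F s t x) (at t)"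
proof -
  have "((\<lambda>(s,t,x). F s t x) \<circ> (\<lambda>\<tau>. (s,\<tau>,x))) differentiable (at t)"
    by (intro differentiable_chain_at smooth3_diff[OF assms]) (auto intro!: derivative_intros)
  then have "(\<lambda>\<tau>. F s \<tau> x) differentiable (at t)" by (simp add: o_def)
  then show ?thesis unfolding pd_t_def by (simp add: vector_derivative_works[symmetric])
qed

lemma smooth3_dx:
  assumes "smooth3 F"
  shows "((\<lambda>\<xi>. F s t \<xi>) has_vector_derivative pd_x F s t x) (at x)"
proof -
  have "((\<lambda>(s,t,x). F s t x) \<circ> (\<lambda>\<xi>. (s,t,\<xi>))) differentiable (at x)"
    by (intro differentiable_chain_at smooth3_diff[OF assms]) (auto intro!: derivative_intros)
  then have "(\<lambda>\<xi>. F s t \<xi>) differentiable (at x)" by (simp add: o_def)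
  then show ?thesis unfolding pd_x_def by (simp add: vector_derivative_works[symmetric])
qed

lemma clairaut:
  fixes g :: "real \<Rightarrow> real \<Rightarrow> 'c::euclidean_space"
  assumes ga: "\<And>a b. ((\<lambda>a. g a b) has_vector_derivative ga a b) (at a)"
    and gb: "\<And>a b. ((\<lambda>b. g a b) has_vector_derivative gb a b) (at b)"
    and gba: "\<And>a b. ((\<lambda>a. gb a b) has_vector_derivative gba a b) (at a)"
    and gab: "\<And>a b. ((\<lambda>b. ga a b) has_vector_derivative gab a b) (at b)"
    and cont: "continuous_on UNIV (\<lambda>p. gba (fst p) (snd p))"
  shows "gab a b = gba a b"
proof -
  define b0 where "b0 = b - 1"
  define b1 where "b1 = b + 1"
  have eq: "ga a y - ga a b0 = integral {b0..y} (gba a)" if y: "y \<in> {b0..b1}" for y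
  proof -
    have ftc: "(gb a' has_integral (g a' y - g a' b0)) {b0..y}" for a'
      using y by (intro fundamental_theorem_of_calculus) (auto intro: has_vector_derivative_at_within gb simp: b0_def)
    have cont2: "continuous_on (UNIV \<times> cbox b0 y) (\<lambda>(x, t). gba x t)"
      using continuous_on_subset[OF cont] by (simp add: case_prod_beta')
    have "((\<lambda>a'. integral (cbox b0 y) (gb a')) has_vector_derivative integral (cbox b0 y) (gba a)) (at a within UNIV)"
      by (rule leibniz_rule_vector_derivative[where fx=gba])
         (use ftc gba cont2 in \<open>auto intro: has_vector_derivative_at_within simp: has_integral_integrable\<close>)
    moreover have "integral (cbox b0 y) (gb a') = g a' y - g a' b0" for a'
      using ftc[of a'] by (simp add: integral_unique)
    ultimately have "((\<lambda>a'. g a' y - g a' b0) has_vector_derivative integral {b0..y} (gba a)) (at a)"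
      by simp
    moreover have "((\<lambda>a'. g a' y - g a' b0) has_vector_derivative ga a y - ga a b0) (at a)"
      by (intro derivative_intros ga)
    ultimately show ?thesis by (metis vector_derivative_unique_at)
  qed
  have c1: "continuous_on {b0..b1} (gba a)"
  proof -
    have "continuous_on {b0..b1} (\<lambda>y. (a, y))" by (intro continuous_intros)
    from continuous_on_compose[OF this continuous_on_subset[OF cont]] show ?thesis
      by (simp add: o_def)
  qed
  have "((\<lambda>y. integral {b0..y} (gba a)) has_vector_derivative gba a b) (at b within {b0..b1})"
    by (rule integral_has_vector_derivative[OF c1]) (auto simp: b0_def b1_def)
  then have d1: "((\<lambda>y. integral {b0..y} (gba a)) has_vector_derivative gba a b) (at b)"
    by (simp add: at_within_Icc_at b0_def b1_def)
  have "((\<lambda>y. ga a y - ga a b0) has_vector_derivative gba a b) (at b)"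
    by (rule has_vector_derivative_transform_within_open[OF d1, of "{b0<..<b1}"])
       (use eq in \<open>auto simp: b0_def b1_def\<close>)
  moreover have "((\<lambda>y. ga a y - ga a b0) has_vector_derivative gab a b - 0) (at b)"
    by (intro derivative_intros gab)
  ultimately show ?thesis by (metis vector_derivative_unique_at diff_zero)
qed

lemma smooth3_clairaut:
  assumes "smooth3 F"
  shows "pd_t (pd_s F) = pd_s (pd_t F)" "pd_x (pd_s F) = pd_s (pd_x F)" "pd_x (pd_t F) = pd_t (pd_x F)"
proof -
  note sm = assms smooth3_pd[OF assms] smooth3_pd[OF smooth3_pd(1)[OF assms]]
     smooth3_pd[OF smooth3_pd(2)[OF assms]] smooth3_pd[OF smooth3_pd(3)[OF assms]]
  have "pd_t (pd_s F) s t x = pd_s (pd_t F) s t x" for s t x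
    by (rule clairaut[where g="\<lambda>a b. F a b x" and ga="\<lambda>a b. pd_s F a b x" and gb="\<lambda>a b. pd_t F a b x"])
       (auto intro!: smooth3_ds smooth3_dt smooth3_cont_comp continuous_intros sm)
  then show "pd_t (pd_s F) = pd_s (pd_t F)" by (auto simp: fun_eq_iff)
  have "pd_x (pd_s F) s t x = pd_s (pd_x F) s t x" for s t x
    by (rule clairaut[where g="\<lambda>a b. F a t b" and ga="\<lambda>a b. pd_s F a t b" and gb="\<lambda>a b. pd_x F a t b"])
       (auto intro!: smooth3_ds smooth3_dx smooth3_cont_comp continuous_intros sm)
  then show "pd_x (pd_s F) = pd_s (pd_x F)" by (auto simp: fun_eq_iff)
  have "pd_x (pd_t F) s t x = pd_t (pd_x F) s t x" for s t x
    by (rule clairaut[where g="\<lambda>a b. F s a b" and ga="\<lambda>a b. pd_t F s a b" and gb="\<lambda>a b. pd_x F s a b"])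
       (auto intro!: smooth3_dt smooth3_dx smooth3_cont_comp continuous_intros sm)
  then show "pd_x (pd_t F) = pd_t (pd_x F)" by (auto simp: fun_eq_iff)
qed

definition pert :: "real \<Rightarrow> (real \<Rightarrow> real \<Rightarrow> real \<Rightarrow> real^4) \<Rightarrow> bool" where
  "pert T F \<longleftrightarrow> (\<forall>s t x. F s (t + T) x = F s t x)"
definition perx :: "(real \<Rightarrow> real \<Rightarrow> real \<Rightarrow> real^4) \<Rightarrow> bool" where
  "perx F \<longleftrightarrow> (\<forall>s t x. F s t (x + 2 * pi) = F s t x)"

lemma pert_pd:
  assumes "smooth3 F" "pert T F"
  shows "pert T (pd_s F)" "pert T (pd_t F)" "pert T (pd_x F)"
proof -
  from assms(2) have p: "F s (t + T) x = F s t x" for s t x by (simp add: pert_def)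
  show "pert T (pd_s F)" unfolding pert_def pd_s_def by (simp add: p)
  have p2: "F s (t + T) = F s t" for s t by (rule ext) (simp add: p)
  show "pert T (pd_x F)" unfolding pert_def pd_x_def by (simp add: p2)
  have "pd_t F s (t + T) x = pd_t F s t x" for s t x
  proof -
    have "((\<lambda>\<tau>. F s \<tau> x) \<circ> (\<lambda>\<tau>. \<tau> + T) has_vector_derivative 1 *\<^sub>R pd_t F s (t + T) x) (at t)"
      by (intro vector_diff_chain_at smooth3_dt[OF assms(1)]) (auto intro!: derivative_eq_intros)
    then have "((\<lambda>\<tau>. F s \<tau> x) has_vector_derivative pd_t F s (t + T) x) (at t)"
      by (simp add: o_def p)
    then show ?thesis using smooth3_dt[OF assms(1)] by (metis vector_derivative_unique_at)
  qed
  then show "pert T (pd_t F)" unfolding pert_def by simp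
qed

lemma perx_pd:
  assumes "smooth3 F" "perx F"
  shows "perx (pd_s F)" "perx (pd_t F)" "perx (pd_x F)"
proof -
  from assms(2) have p: "F s t (x + 2 * pi) = F s t x" for s t x by (simp add: perx_def)
  show "perx (pd_s F)" unfolding perx_def pd_s_def by (simp add: p)
  show "perx (pd_t F)" unfolding perx_def pd_t_def by (simp add: p)
  have "pd_x F s t (x + 2 * pi) = pd_x F s t x" for s t x
  proof -
    have "((\<lambda>\<tau>. F s t \<tau>) \<circ> (\<lambda>\<tau>. \<tau> + 2 * pi) has_vector_derivative 1 *\<^sub>R pd_x F s t (x + 2 * pi)) (at x)"
      by (intro vector_diff_chain_at smooth3_dx[OF assms(1)]) (auto intro!: derivative_eq_intros)
    then have "((\<lambda>\<tau>. F s t \<tau>) has_vector_derivative pd_x F s t (x + 2 * pi)) (at x)"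
      by (simp add: o_def p)
    then show ?thesis using smooth3_dx[OF assms(1)] by (metis vector_derivative_unique_at)
  qed
  then show "perx (pd_x F)" unfolding perx_def by simp
qed

lemma per_shift1:
  fixes f :: "real \<Rightarrow> 'a"
  assumes "\<And>y. f (y + P) = f y"
  shows "f (y + of_int k * P) = f y"
proof -
  have n: "f (z + real n * P) = f z" for z n
  proof (induction n)
    case (Suc n)
    have "z + real (Suc n) * P = (z + real n * P) + P" by (simp add: algebra_simps)
    then show ?case using Suc assms by metis
  qed simp
  show ?thesis
  proof (cases "k \<ge> 0")
    case True then show ?thesis using n[of y "nat k"] by simp
  next
    case False
    then have "y = (y + of_int k * P) + real (nat (-k)) * P" by simp
    then show ?thesis using n[of "y + of_int k * P" "nat (-k)"] by metis
  qed
qed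

lemma per_reduce:
  fixes f :: "real \<Rightarrow> 'a"
  assumes "\<And>y. f (y + P) = f y" "P > 0"
  shows "\<exists>y0\<in>{0..P}. f y = f y0"
proof -
  define k where "k = \<lfloor>y / P\<rfloor>"
  define y0 where "y0 = y - of_int k * P"
  have "of_int k \<le> y / P" "y / P < of_int k + 1" unfolding k_def by linarith+
  then have "0 \<le> y0" "y0 \<le> P" using assms(2) unfolding y0_def
    by (auto simp: field_simps)
  moreover have "f y = f y0"
    using per_shift1[of f P y0 k, OF assms(1)] by (simp add: y0_def)
  ultimately show ?thesis by auto
qed

lemma zero_reduce:
  assumes "pert T F" "perx F" "T > 0"
    and "\<And>t x. t \<in> {0..T} \<Longrightarrow> x \<in> {0..2*pi} \<Longrightarrow> F s t x = 0"
  shows "F s t x = 0"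
proof -
  obtain t0 where t0: "t0 \<in> {0..T}" "F s t x = F s t0 x"
    using per_reduce[of "\<lambda>t. F s t x" T t] assms(1,3) by (auto simp: pert_def)
  obtain x0 where x0: "x0 \<in> {0..2*pi}" "F s t0 x = F s t0 x0"
    using per_reduce[of "\<lambda>x. F s t0 x" "2*pi" x] assms(2) by (auto simp: perx_def)
  show ?thesis using t0 x0 assms(4) by simp
qed

lemma hvd_cont:
  assumes "\<And>y. (u has_vector_derivative u' y) (at y)"
  shows "continuous_on S u"
  by (metis assms continuous_at_imp_continuous_on has_vector_derivative_continuous)

lemma ibp1:
  fixes u v :: "real \<Rightarrow> real^4"
  assumes du: "\<And>y. (u has_vector_derivative u' y) (at y)"
    and dv: "\<And>y. (v has_vector_derivative v' y) (at y)"
    and cu: "continuous_on {a..b} u'" and cv: "continuous_on {a..b} v'"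
    and bd: "u b \<bullet> v b = u a \<bullet> v a" and ab: "a \<le> b"
  shows "integral {a..b} (\<lambda>y. u' y \<bullet> v y) = - integral {a..b} (\<lambda>y. u y \<bullet> v' y)"
proof -
  have "((\<lambda>y. u' y \<bullet> v y + u y \<bullet> v' y) has_integral (u b \<bullet> v b - u a \<bullet> v a)) {a..b}"
    by (rule fundamental_theorem_of_calculus[OF ab has_vector_derivative_at_within[OF hvd_inner[OF du dv]]])
  then have "integral {a..b} (\<lambda>y. u' y \<bullet> v y + u y \<bullet> v' y) = 0" using bd by (simp add: integral_unique)
  moreover have "integral {a..b} (\<lambda>y. u' y \<bullet> v y + u y \<bullet> v' y) =
      integral {a..b} (\<lambda>y. u' y \<bullet> v y) + integral {a..b} (\<lambda>y. u y \<bullet> v' y)"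
  proof -
    have "continuous_on {a..b} u" "continuous_on {a..b} v" using hvd_cont[OF du] hvd_cont[OF dv] by auto
    then show ?thesis using cu cv
      by (intro integral_add integrable_continuous_interval continuous_on_inner) auto
  qed
  ultimately show ?thesis by linarith
qed

lemma cont_sm2:
  assumes "smooth3 F" 
  shows "continuous_on S (\<lambda>p. F s (fst p) (snd p))"
  by (intro smooth3_cont_comp assms continuous_intros)

lemma iter_int:
  fixes f :: "real \<Rightarrow> real \<Rightarrow> real"
  assumes "continuous_on UNIV (\<lambda>p. f (fst p) (snd p))"
  shows "integral (cbox (a,c) (b,d)) (\<lambda>p. f (fst p) (snd p)) = integral (cbox a b) (\<lambda>t. integral (cbox c d) (\<lambda>x. f t x))"
    "integral (cbox (a,c) (b,d)) (\<lambda>p. f (fst p) (snd p)) = integral (cbox c d) (\<lambda>x. integral (cbox a b) (\<lambda>t. f t x))"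
proof -
  have c: "continuous_on (cbox (a,c) (b,d)) (\<lambda>p. f (fst p) (snd p))"
    by (rule continuous_on_subset[OF assms]) simp
  show 1: "integral (cbox (a,c) (b,d)) (\<lambda>p. f (fst p) (snd p)) = integral (cbox a b) (\<lambda>t. integral (cbox c d) (\<lambda>x. f t x))"
    using integral_prod_continuous[OF c] by simp
  have c2: "continuous_on (cbox (a,c) (b,d)) (\<lambda>(x,y). f x y)"
    using c by (simp add: case_prod_beta')
  show "integral (cbox (a,c) (b,d)) (\<lambda>p. f (fst p) (snd p)) = integral (cbox c d) (\<lambda>x. integral (cbox a b) (\<lambda>t. f t x))"
    unfolding 1 by (rule integral_swap_continuous[OF c2])
qed

lemma cont_1x: "smooth3 F \<Longrightarrow> continuous_on S (\<lambda>y. F s t y)"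
  using smooth3_cont_comp[of F S "\<lambda>_. s" "\<lambda>_. t" "\<lambda>y. y"] by (simp add: continuous_on_const continuous_on_id)
lemma cont_1t: "smooth3 F \<Longrightarrow> continuous_on S (\<lambda>y. F s y x)"
  using smooth3_cont_comp[of F S "\<lambda>_. s" "\<lambda>y. y" "\<lambda>_. x"] by (simp add: continuous_on_const continuous_on_id)
lemma cont_1s: "smooth3 F \<Longrightarrow> continuous_on S (\<lambda>y. F y t x)"
  using smooth3_cont_comp[of F S "\<lambda>y. y" "\<lambda>_. t" "\<lambda>_. x"] by (simp add: continuous_on_const continuous_on_id)

lemma ibp_x:
  assumes F: "smooth3 F" "perx F" and G: "smooth3 G" "perx G"
  shows "integral (cbox (a,0) (b,2*pi)) (\<lambda>p. pd_x F s (fst p) (snd p) \<bullet> G s (fst p) (snd p))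
       = - integral (cbox (a,0) (b,2*pi)) (\<lambda>p. F s (fst p) (snd p) \<bullet> pd_x G s (fst p) (snd p))"
proof -
  note sm = smooth3_pd[OF F(1)] smooth3_pd[OF G(1)]
  have inner: "integral (cbox 0 (2*pi)) (\<lambda>x. pd_x F s t x \<bullet> G s t x)
      = - integral (cbox 0 (2*pi)) (\<lambda>x. F s t x \<bullet> pd_x G s t x)" for t
  proof -
    have "F s t (0 + 2*pi) = F s t 0" "G s t (0 + 2*pi) = G s t 0"
      using F(2) G(2) unfolding perx_def by blast+
    then have bd: "F s t (2*pi) \<bullet> G s t (2*pi) = F s t 0 \<bullet> G s t 0" by simp
    show ?thesis unfolding cbox_interval
      by (rule ibp1[OF smooth3_dx[OF F(1)] smooth3_dx[OF G(1)] _ _ bd])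
         (rule cont_1x[OF sm(3)], rule cont_1x[OF sm(6)], simp)
  qed
  have c1: "continuous_on UNIV (\<lambda>p. pd_x F s (fst p) (snd p) \<bullet> G s (fst p) (snd p))"
    by (intro continuous_on_inner cont_sm2 sm G)
  have c2: "continuous_on UNIV (\<lambda>p. F s (fst p) (snd p) \<bullet> pd_x G s (fst p) (snd p))"
    by (intro continuous_on_inner cont_sm2 sm F)
  show ?thesis
    unfolding iter_int(1)[OF c1] iter_int(1)[OF c2] inner by (rule integral_neg)
qed

lemma ibp_t:
  assumes F: "smooth3 F" "pert T F" and G: "smooth3 G" "pert T G" and T: "T \<ge> 0"
  shows "integral (cbox (0,c) (T,d)) (\<lambda>p. pd_t F s (fst p) (snd p) \<bullet> G s (fst p) (snd p))
       = - integral (cbox (0,c) (T,d)) (\<lambda>p. F s (fst p) (snd p) \<bullet> pd_t G s (fst p) (snd p))"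
proof -
  note sm = smooth3_pd[OF F(1)] smooth3_pd[OF G(1)]
  have inner: "integral (cbox 0 T) (\<lambda>t. pd_t F s t x \<bullet> G s t x)
      = - integral (cbox 0 T) (\<lambda>t. F s t x \<bullet> pd_t G s t x)" for x
  proof -
    have "F s (0 + T) x = F s 0 x" "G s (0 + T) x = G s 0 x"
      using F(2) G(2) unfolding pert_def by blast+
    then have bd: "F s T x \<bullet> G s T x = F s 0 x \<bullet> G s 0 x" by simp
    show ?thesis unfolding cbox_interval
      by (rule ibp1[OF smooth3_dt[OF F(1)] smooth3_dt[OF G(1)] _ _ bd])
         (rule cont_1t[OF sm(2)], rule cont_1t[OF sm(5)], rule T)
  qed
  have c1: "continuous_on UNIV (\<lambda>p. pd_t F s (fst p) (snd p) \<bullet> G s (fst p) (snd p))"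
    by (intro continuous_on_inner cont_sm2 sm G)
  have c2: "continuous_on UNIV (\<lambda>p. F s (fst p) (snd p) \<bullet> pd_t G s (fst p) (snd p))"
    by (intro continuous_on_inner cont_sm2 sm F)
  show ?thesis
    unfolding iter_int(2)[OF c1] iter_int(2)[OF c2] inner by (rule integral_neg)
qed

lemma mv_hvd:
  fixes M :: "real^4^4"
  assumes "(g has_vector_derivative g') F"
  shows "((\<lambda>x. M *v g x) has_vector_derivative M *v g') F"
  using bounded_linear.has_derivative[OF matrix_vector_mul_bounded_linear assms[unfolded has_vector_derivative_def], of M]
  unfolding has_vector_derivative_def by (simp add: matrix_vector_mult_scaleR)

definition lmap :: "real^4^4 \<Rightarrow> (real \<Rightarrow> real \<Rightarrow> real \<Rightarrow> real^4) \<Rightarrow> (real \<Rightarrow> real \<Rightarrow> real \<Rightarrow> real^4)" where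
  "lmap M F = (\<lambda>s t x. M *v F s t x)"

lemma pd_word_append: "pd_word v (pd_word w F) = pd_word (v @ w) F"
proof (induction v)
  case (Cons a v) then show ?case by (cases a) simp_all
qed simp

lemma smooth3_word: "smooth3 F \<Longrightarrow> smooth3 (pd_word w F)"
  unfolding smooth3_def pd_word_append by blast

lemma lmap_pd:
  assumes "smooth3 F"
  shows "pd_s (lmap M F) = lmap M (pd_s F)" "pd_t (lmap M F) = lmap M (pd_t F)" "pd_x (lmap M F) = lmap M (pd_x F)"
  unfolding lmap_def
  by (auto simp: fun_eq_iff pd_s_def[of "\<lambda>s t x. M *v F s t x"] pd_t_def[of "\<lambda>s t x. M *v F s t x"]
      pd_x_def[of "\<lambda>s t x. M *v F s t x"]
      intro!: vector_derivative_at mv_hvd smooth3_ds[OF assms]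
      smooth3_dt[OF assms] smooth3_dx[OF assms])

lemma pd_word_lmap:
  assumes "smooth3 F"
  shows "pd_word w (lmap M F) = lmap M (pd_word w F)"
proof (induction w)
  case (Cons a w)
  have "smooth3 (pd_word w F)" by (rule smooth3_word[OF assms])
  then show ?case using Cons by (cases a) (simp_all add: lmap_pd)
qed simp

lemma smooth3_lmap:
  assumes "smooth3 F"
  shows "smooth3 (lmap M F)"
  unfolding smooth3_def pd_word_lmap[OF assms]
proof (intro allI)
  fix w p
  have "(\<lambda>(s,t,x). pd_word w F s t x) differentiable (at p)"
    using assms unfolding smooth3_def by blast
  then have "((*v) M \<circ> (\<lambda>(s,t,x). pd_word w F s t x)) differentiable (at p)"
    by (rule differentiable_chain_at[OF _ bounded_linear_imp_differentiable[OF matrix_vector_mul_bounded_linear]])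
  then show "(\<lambda>(s, t, x). lmap M (pd_word w F) s t x) differentiable at p"
    by (simp add: o_def lmap_def case_prod_beta')
qed

lemma pert_lmap: "pert T F \<Longrightarrow> pert T (lmap M F)" by (simp add: pert_def lmap_def)
lemma perx_lmap: "perx F \<Longrightarrow> perx (lmap M F)" by (simp add: perx_def lmap_def)

lemma M1v: "M1 *v a = vector [- a$2, a$1, a$4, - a$3]"
  unfolding M1_def
  by (simp add: vec_eq_iff forall_4 matrix_vector_mult_def sum_4 vector_def)
lemma M2v: "M2 *v a = vector [a$3, - a$4, - a$1, a$2]"
  unfolding M2_def
  by (simp add: vec_eq_iff forall_4 matrix_vector_mult_def sum_4 vector_def)
lemma vec4_comp: "(vector [a, b, c, d] :: real^4) $ 1 = a" "(vector [a, b, c, d] :: real^4) $ 2 = b"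
  "(vector [a, b, c, d] :: real^4) $ 3 = c" "(vector [a, b, c, d] :: real^4) $ 4 = d"
  by (simp_all add: vector_def)
lemma inner4: "(a::real^4) \<bullet> b = a$1 * b$1 + a$2 * b$2 + a$3 * b$3 + a$4 * b$4"
  by (simp add: inner_vec_def sum_4)

lemma M1_skew: "(M1 *v a) \<bullet> b = - (a \<bullet> (M1 *v b))"
  by (simp add: M1v inner4 vec4_comp algebra_simps)
lemma M2_skew: "(M2 *v a) \<bullet> b = - (a \<bullet> (M2 *v b))"
  by (simp add: M2v inner4 vec4_comp algebra_simps)

definition eqD :: "(real \<Rightarrow> real \<Rightarrow> real \<Rightarrow> real^4) \<Rightarrow> bool" where
  "eqD F \<longleftrightarrow> (\<forall>s t x. pd_s F s t x + M1 *v pd_t F s t x + M2 *v pd_x F s t x = 0)"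

lemma eqD_s:
  assumes sm: "smooth3 F" and e: "eqD F"
  shows "eqD (pd_s F)"
proof -
  note sm1 = smooth3_pd[OF sm]
  have "pd_s (pd_s F) s t x + M1 *v pd_s (pd_t F) s t x + M2 *v pd_s (pd_x F) s t x = 0" for s t x
  proof -
    have "((\<lambda>\<sigma>. pd_s F \<sigma> t x + M1 *v pd_t F \<sigma> t x + M2 *v pd_x F \<sigma> t x) has_vector_derivative
        pd_s (pd_s F) s t x + M1 *v pd_s (pd_t F) s t x + M2 *v pd_s (pd_x F) s t x) (at s)"
      by (intro has_vector_derivative_add mv_hvd smooth3_ds sm1)
    moreover have "((\<lambda>\<sigma>. pd_s F \<sigma> t x + M1 *v pd_t F \<sigma> t x + M2 *v pd_x F \<sigma> t x) has_vector_derivative 0) (at s)"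
      using e unfolding eqD_def by (simp add: has_vector_derivative_const)
    ultimately show ?thesis by (rule vector_derivative_unique_at)
  qed
  then show ?thesis unfolding eqD_def smooth3_clairaut[OF sm, symmetric] by simp
qed

lemma intg_cont:
  fixes f :: "'a::euclidean_space \<Rightarrow> 'b::banach"
  assumes "continuous_on UNIV f"
  shows "f integrable_on cbox a b"
  by (rule integrable_continuous, rule continuous_on_subset[OF assms], simp)

lemma cont_in2:
  assumes "smooth3 F" "smooth3 G"
  shows "continuous_on UNIV (\<lambda>p. F s (fst p) (snd p) \<bullet> G s (fst p) (snd p))"
  by (intro continuous_on_inner cont_sm2 assms)

lemma symA:
  assumes F: "smooth3 F" "pert T F" "perx F" and G: "smooth3 G" "pert T G" "perx G" and T: "T \<ge> 0"
  shows "integral (cbox (0,0) (T,2*pi)) (\<lambda>p. (M1 *v pd_t F s (fst p) (snd p) + M2 *v pd_x F s (fst p) (snd p)) \<bullet> G s (fst p) (snd p))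
       = integral (cbox (0,0) (T,2*pi)) (\<lambda>p. F s (fst p) (snd p) \<bullet> (M1 *v pd_t G s (fst p) (snd p) + M2 *v pd_x G s (fst p) (snd p)))"
    (is "integral ?Q ?L = integral ?Q ?R")
proof -
  note smF = smooth3_pd[OF F(1)] and smG = smooth3_pd[OF G(1)]
  note l1 = smooth3_lmap[OF G(1), of M1] and l2 = smooth3_lmap[OF G(1), of M2]
  note l1' = smooth3_lmap[OF smG(2), of M1] and l2' = smooth3_lmap[OF smG(3), of M2]
  have L: "?L = (\<lambda>p. - (pd_t F s (fst p) (snd p) \<bullet> lmap M1 G s (fst p) (snd p)) - pd_x F s (fst p) (snd p) \<bullet> lmap M2 G s (fst p) (snd p))"
    by (auto simp: fun_eq_iff inner_add_left M1_skew M2_skew lmap_def)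
  have R: "?R = (\<lambda>p. F s (fst p) (snd p) \<bullet> pd_t (lmap M1 G) s (fst p) (snd p) + F s (fst p) (snd p) \<bullet> pd_x (lmap M2 G) s (fst p) (snd p))"
    unfolding lmap_pd[OF G(1)] by (auto simp: fun_eq_iff inner_add_right lmap_def)
  have "integral ?Q ?L = - integral ?Q (\<lambda>p. pd_t F s (fst p) (snd p) \<bullet> lmap M1 G s (fst p) (snd p))
         - integral ?Q (\<lambda>p. pd_x F s (fst p) (snd p) \<bullet> lmap M2 G s (fst p) (snd p))"
  proof -
    have i1: "(\<lambda>p. pd_t F s (fst p) (snd p) \<bullet> lmap M1 G s (fst p) (snd p)) integrable_on ?Q"
      by (rule intg_cont[OF cont_in2[OF smF(2) l1]])
    have i2: "(\<lambda>p. pd_x F s (fst p) (snd p) \<bullet> lmap M2 G s (fst p) (snd p)) integrable_on ?Q"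
      by (rule intg_cont[OF cont_in2[OF smF(3) l2]])
    show ?thesis unfolding L integral_diff[OF integrable_neg[OF i1] i2] integral_neg ..
  qed
  also have "\<dots> = integral ?Q (\<lambda>p. F s (fst p) (snd p) \<bullet> pd_t (lmap M1 G) s (fst p) (snd p))
        + integral ?Q (\<lambda>p. F s (fst p) (snd p) \<bullet> pd_x (lmap M2 G) s (fst p) (snd p))"
    using ibp_t[OF F(1,2) l1 pert_lmap[OF G(2)] T, of 0 "2*pi" s]
      ibp_x[OF F(1,3) l2 perx_lmap[OF G(3)], of 0 T s] by simp
  also have "\<dots> = integral ?Q ?R"
    unfolding R lmap_pd[OF G(1)]
    by (rule integral_add[symmetric]; rule intg_cont[OF cont_in2]; rule F l1' l2')
  finally show ?thesis .
qed

lemma convex_zero: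
  fixes h k k' :: "real \<Rightarrow> real"
  assumes dh: "\<And>s. (h has_real_derivative k s) (at s)"
    and dk: "\<And>s. (k has_real_derivative k' s) (at s)"
    and k'pos: "\<And>s. k' s \<ge> 0" and hpos: "\<And>s. h s \<ge> 0"
    and r: "\<And>s0 c. c > 0 \<Longrightarrow> \<not> (\<forall>s\<ge>s0. h s \<ge> c)"
    and l: "\<And>s0 c. c > 0 \<Longrightarrow> \<not> (\<forall>s\<le>s0. h s \<ge> c)"
  shows "h s0 = 0"
proof (rule ccontr)
  assume "h s0 \<noteq> 0"
  with hpos have c: "h s0 > 0" by (simp add: order_less_le)
  have kmono: "k a \<le> k b" if "a \<le> b" for a b
    by (rule DERIV_nonneg_imp_nondecreasing[OF that]) (use dk k'pos in blast)
  show False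
  proof (cases "k s0 \<ge> 0")
    case True
    have "h s \<ge> h s0" if "s \<ge> s0" for s
    proof (rule DERIV_nonneg_imp_nondecreasing[OF that])
      fix x assume "s0 \<le> x" "x \<le> s"
      then show "\<exists>y. DERIV h x :> y \<and> 0 \<le> y"
        using dh kmono[of s0 x] True by fastforce
    qed
    then show False using r[OF c, of s0] by blast
  next
    case False
    have "h s \<ge> h s0" if "s \<le> s0" for s
    proof (rule DERIV_nonpos_imp_nonincreasing[OF that])
      fix x assume "s \<le> x" "x \<le> s0"
      then show "\<exists>y. DERIV h x :> y \<and> y \<le> 0"
        using dh kmono[of x s0] False by fastforce
    qed
    then show False using l[OF c, of s0] by blast
  qed
qed

lemma halfline_inf:
  fixes h :: "real \<Rightarrow> real"
  assumes fin: "(\<integral>\<^sup>+ s. ennreal (h s) \<partial>lborel) < \<infinity>" and c: "c > 0"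
  shows "\<not> (\<forall>s\<ge>s0. h s \<ge> c)" "\<not> (\<forall>s\<le>s0. h s \<ge> c)"
proof -
  obtain r where r: "(\<integral>\<^sup>+ s. ennreal (h s) \<partial>lborel) = ennreal r" "r \<ge> 0"
    using fin by (cases "(\<integral>\<^sup>+ s. ennreal (h s) \<partial>lborel)") auto
  obtain n :: nat where n: "real n > r / c" using reals_Archimedean2 by blast
  have key: "False" if A: "\<forall>s\<in>A. h s \<ge> c" and A2: "A \<in> sets lborel" "emeasure lborel A = ennreal (real n)" for A
  proof -
    have "(\<integral>\<^sup>+ s. ennreal c * indicator A s \<partial>lborel) \<le> (\<integral>\<^sup>+ s. ennreal (h s) \<partial>lborel)"
      by (rule nn_integral_mono) (use A in \<open>auto simp: indicator_def intro: ennreal_leI\<close>)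
    also have "(\<integral>\<^sup>+ s. ennreal c * indicator A s \<partial>lborel) = ennreal c * ennreal (real n)"
      using A2 by (simp add: nn_integral_cmult_indicator)
    finally have "ennreal (c * real n) \<le> ennreal r" using r c by (simp add: ennreal_mult)
    then have "c * real n \<le> r" using r(2) by (simp add: ennreal_le_iff)
    moreover have "c * real n > r" using n c by (simp add: field_simps)
    ultimately show False by simp
  qed
  show "\<not> (\<forall>s\<ge>s0. h s \<ge> c)"
  proof
    assume "\<forall>s\<ge>s0. h s \<ge> c"
    then show False by (intro key[of "{s0..s0 + real n}"]) auto
  qed
  show "\<not> (\<forall>s\<le>s0. h s \<ge> c)"
  proof
    assume "\<forall>s\<le>s0. h s \<ge> c"
    then show False by (intro key[of "{s0 - real n..s0}"]) auto
  qed
qed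

definition II :: "real \<Rightarrow> (real \<Rightarrow> real \<Rightarrow> real \<Rightarrow> real^4) \<Rightarrow> (real \<Rightarrow> real \<Rightarrow> real \<Rightarrow> real^4) \<Rightarrow> real \<Rightarrow> real" where
  "II T F G s = integral (cbox (0,0) (T,2*pi)) (\<lambda>p. F s (fst p) (snd p) \<bullet> G s (fst p) (snd p))"

lemma cont_in3:
  assumes "smooth3 F" "smooth3 G"
  shows "continuous_on S (\<lambda>y. F (fst y) (fst (snd y)) (snd (snd y)) \<bullet> G (fst y) (fst (snd y)) (snd (snd y)))"
  by (intro continuous_on_inner smooth3_cont_comp assms continuous_on_fst continuous_on_snd continuous_on_id)

lemma II_deriv:
  assumes F: "smooth3 F" and G: "smooth3 G"
  shows "((\<lambda>s. II T F G s) has_real_derivative (II T (pd_s F) G s + II T F (pd_s G) s)) (at s)"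
proof -
  note smF = smooth3_pd[OF F] and smG = smooth3_pd[OF G]
  define Q where "Q = cbox (0::real,0::real) (T,2*pi)"
  define fx where "fx = (\<lambda>s (p::real\<times>real). pd_s F s (fst p) (snd p) \<bullet> G s (fst p) (snd p) + F s (fst p) (snd p) \<bullet> pd_s G s (fst p) (snd p))"
  have "((\<lambda>s. integral (cbox (0,0) (T,2*pi)) (\<lambda>p. F s (fst p) (snd p) \<bullet> G s (fst p) (snd p))) has_vector_derivative
      integral (cbox (0,0) (T,2*pi)) (fx s)) (at s within UNIV)"
  proof (rule leibniz_rule_vector_derivative)
    fix x :: real and t :: "real \<times> real"
    show "((\<lambda>x. F x (fst t) (snd t) \<bullet> G x (fst t) (snd t)) has_vector_derivative fx x t) (at x within UNIV)"
      unfolding fx_def by (rule hvd_inner[OF smooth3_ds[OF F] smooth3_ds[OF G]])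
  next
    fix x :: real
    show "(\<lambda>p. F x (fst p) (snd p) \<bullet> G x (fst p) (snd p)) integrable_on cbox (0, 0) (T, 2 * pi)"
      by (rule intg_cont[OF cont_in2[OF F G]])
  next
    have "continuous_on (UNIV \<times> cbox (0, 0) (T, 2 * pi))
       (\<lambda>y. pd_s F (fst y) (fst (snd y)) (snd (snd y)) \<bullet> G (fst y) (fst (snd y)) (snd (snd y))
          + F (fst y) (fst (snd y)) (snd (snd y)) \<bullet> pd_s G (fst y) (fst (snd y)) (snd (snd y)))"
      by (intro continuous_on_add cont_in3 smF(1) smG(1) F G)
    then show "continuous_on (UNIV \<times> cbox (0, 0) (T, 2 * pi)) (\<lambda>(x, t). fx x t)"
      unfolding fx_def by (simp add: case_prod_beta')
  qed auto
  moreover have "integral (cbox (0,0) (T,2*pi)) (fx s) = II T (pd_s F) G s + II T F (pd_s G) s"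
    unfolding fx_def II_def
    by (rule integral_add; rule intg_cont[OF cont_in2]; rule smF(1) smG(1) F G)
  ultimately show ?thesis
    unfolding has_real_derivative_iff_has_vector_derivative II_def by simp
qed

lemma II_nonneg:
  assumes "smooth3 F" "T \<ge> 0"
  shows "II T F F s \<ge> 0"
  unfolding II_def
  by (rule integral_nonneg[OF intg_cont[OF cont_in2[OF assms(1) assms(1)]]]) simp

lemma II_comm: "II T F G s = II T G F s"
  unfolding II_def by (simp add: inner_commute)

lemma energy_h:
  assumes V: "smooth3 V" and T: "T > 0"
  shows "(\<integral>\<^sup>+ t. (\<integral>\<^sup>+ x. ennreal ((norm (V s t x))\<^sup>2) * indicator {0..2 * pi} x \<partial>lborel)
                    * indicator {0..T} t \<partial>lborel) = ennreal (II T V V s)"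
proof -
  define g where "g t = integral {0..2*pi} (\<lambda>x. V s t x \<bullet> V s t x)" for t
  have inner: "(\<integral>\<^sup>+ x. ennreal ((norm (V s t x))\<^sup>2) * indicator {0..2 * pi} x \<partial>lborel) = ennreal (g t)" for t
  proof -
    have "continuous_on {0..2*pi} (\<lambda>x. V s t x \<bullet> V s t x)"
      by (intro continuous_on_inner cont_1x V)
    then have "((\<lambda>x. V s t x \<bullet> V s t x) has_integral g t) {0..2*pi}"
      unfolding g_def by (intro integrable_integral integrable_continuous_interval)
    from nn_integral_has_integral_lebesgue'[OF _ this] show ?thesis
      by (simp add: power2_norm_eq_inner)
  qed
  have gnn: "g t \<ge> 0" for t
    unfolding g_def by (rule integral_nonneg) (auto intro!: integrable_continuous_interval continuous_on_inner cont_1x V)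
  have gc: "continuous_on UNIV g"
  proof -
    have "continuous_on (UNIV \<times> cbox 0 (2*pi)) (\<lambda>(t, x). V s t x \<bullet> V s t x)"
      using cont_in2[OF V V, of s] continuous_on_subset by (fastforce simp: case_prod_beta')
    from integral_continuous_on_param[OF this] show ?thesis unfolding g_def by simp
  qed
  have "(g has_integral integral {0..T} g) {0..T}"
    by (intro integrable_integral integrable_continuous_interval continuous_on_subset[OF gc]) auto
  from nn_integral_has_integral_lebesgue'[OF _ this] gnn
  have outer: "(\<integral>\<^sup>+ t. ennreal (g t) * indicator {0..T} t \<partial>lborel) = ennreal (integral {0..T} g)" by simp
  have "integral {0..T} g = II T V V s"
    unfolding II_def iter_int(1)[OF cont_in2[OF V V]] g_def by simp
  then show ?thesis using inner outer by simp
qed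

lemma P1:
  assumes T: "T > 0" and sm: "smooth3 Z" and pt: "pert T Z" and px: "perx Z" and e: "eqD Z"
    and energy: "(\<integral>\<^sup>+ s. (\<integral>\<^sup>+ t. (\<integral>\<^sup>+ x.
                    ennreal ((norm (pd_s Z s t x))\<^sup>2) * indicator {0..2 * pi} x \<partial>lborel)
                    * indicator {0..T} t \<partial>lborel) \<partial>lborel) < \<infinity>"
  shows "pd_s Z s t x = 0"
proof -
  define V where "V = pd_s Z"
  define W where "W = pd_s V"
  define X where "X = pd_s W"
  have smV: "smooth3 V" and smW: "smooth3 W" and smX: "smooth3 X"
    unfolding V_def W_def X_def using smooth3_pd sm by blast+
  have ptV: "pert T V" "perx V" unfolding V_def using pert_pd perx_pd sm pt px by blast+
  have ptW: "pert T W" "perx W" unfolding W_def using pert_pd perx_pd smV ptV by blast+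
  have eV: "eqD V" unfolding V_def by (rule eqD_s[OF sm e])
  have eW: "eqD W" unfolding W_def by (rule eqD_s[OF smV eV])
  define h where "h s = II T V V s" for s
  define k where "k s = II T W V s + II T V W s" for s
  define k' where "k' s = (II T X V s + II T W W s) + (II T W W s + II T V X s)" for s
  have dh: "(h has_real_derivative k s) (at s)" for s
    unfolding h_def k_def W_def using II_deriv[OF smV smV] by simp
  have dk: "(k has_real_derivative k' s) (at s)" for s
  proof -
    have "((\<lambda>s. II T W V s + II T V W s) has_real_derivative (II T (pd_s W) V s + II T W (pd_s V) s) + (II T (pd_s V) W s + II T V (pd_s W) s)) (at s)"
      by (rule DERIV_add[OF II_deriv[OF smW smV] II_deriv[OF smV smW]])
    then show ?thesis unfolding k_def k'_def X_def W_def[symmetric] by simp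
  qed
  have XV: "II T X V s = II T W W s" for s
  proof -
    have X: "X s t x = - (M1 *v pd_t W s t x + M2 *v pd_x W s t x)" for t x
    proof -
      have "pd_s W s t x + M1 *v pd_t W s t x + M2 *v pd_x W s t x = 0" using eW unfolding eqD_def by blast
      then show ?thesis unfolding X_def by (metis add.assoc eq_neg_iff_add_eq_0)
    qed
    have Vw: "M1 *v pd_t V s t x + M2 *v pd_x V s t x = - W s t x" for t x
    proof -
      have "pd_s V s t x + M1 *v pd_t V s t x + M2 *v pd_x V s t x = 0" using eV unfolding eqD_def by blast
      then have "pd_s V s t x + (M1 *v pd_t V s t x + M2 *v pd_x V s t x) = 0" by (simp only: add.assoc)
      then have "- pd_s V s t x = M1 *v pd_t V s t x + M2 *v pd_x V s t x" by (simp only: neg_eq_iff_add_eq_0)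
      then show ?thesis unfolding W_def by simp
    qed
    have "II T X V s = - integral (cbox (0,0) (T,2*pi)) (\<lambda>p. (M1 *v pd_t W s (fst p) (snd p) + M2 *v pd_x W s (fst p) (snd p)) \<bullet> V s (fst p) (snd p))"
      unfolding II_def X by (simp only: inner_minus_left integral_neg)
    also have "\<dots> = - integral (cbox (0,0) (T,2*pi)) (\<lambda>p. W s (fst p) (snd p) \<bullet> (M1 *v pd_t V s (fst p) (snd p) + M2 *v pd_x V s (fst p) (snd p)))"
      using symA[OF smW ptW smV ptV, of s] T by simp
    also have "\<dots> = II T W W s"
      unfolding II_def Vw by (simp only: inner_minus_right integral_neg minus_minus)
    finally show ?thesis .
  qed
  have k'nn: "k' s \<ge> 0" for s
    unfolding k'_def using XV[of s] II_comm[of T V X s] II_nonneg[OF smW, of T s] T by simp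
  have hnn: "h s \<ge> 0" for s unfolding h_def using II_nonneg[OF smV, of T s] T by simp
  have fin: "(\<integral>\<^sup>+ s. ennreal (h s) \<partial>lborel) < \<infinity>"
    using energy energy_h[OF smV T] unfolding h_def V_def by simp
  have h0: "h s = 0" for s
    by (rule convex_zero[OF dh dk k'nn hnn]) (use halfline_inf[OF fin] in auto)
  have V0: "V s t x = 0" if "t \<in> {0..T}" "x \<in> {0..2*pi}" for t x
  proof -
    have "(\<lambda>p. V s (fst p) (snd p) \<bullet> V s (fst p) (snd p)) (t, x) = 0"
    proof (rule has_integral_0_cbox_imp_0[of "(0,0)" "(T,2*pi)"])
      show "continuous_on (cbox (0, 0) (T, 2 * pi)) (\<lambda>p. V s (fst p) (snd p) \<bullet> V s (fst p) (snd p))"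
        by (rule continuous_on_subset[OF cont_in2[OF smV smV]]) simp
      show "((\<lambda>p. V s (fst p) (snd p) \<bullet> V s (fst p) (snd p)) has_integral 0) (cbox (0, 0) (T, 2 * pi))"
      proof -
        have i: "(\<lambda>p. V s (fst p) (snd p) \<bullet> V s (fst p) (snd p)) integrable_on cbox (0,0) (T,2*pi)"
          by (rule intg_cont[OF cont_in2[OF smV smV]])
        show ?thesis using integrable_integral[OF i] h0[of s] unfolding h_def II_def by simp
      qed
      have "(T/2, pi) \<in> box (0,0) (T,2*pi)" using T pi_gt_zero by (simp add: mem_box Basis_prod_def inner_Pair)
      then show "box (0, 0) (T, 2 * pi) \<noteq> {}" by blast
      show "(t, x) \<in> cbox (0, 0) (T, 2 * pi)" using that by (simp add: cbox_interval)
      show "\<And>x. x \<in> box (0, 0) (T, 2 * pi) \<Longrightarrow> 0 \<le> V s (fst x) (snd x) \<bullet> V s (fst x) (snd x)" by simp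
    qed
    then show ?thesis by simp
  qed
  have "V s t x = 0"
    by (rule zero_reduce[OF ptV T V0])
  then show ?thesis unfolding V_def .
qed

lemma dir_deriv:
  assumes sm: "smooth3 F"
  shows "((\<lambda>\<tau>. F s (a + \<tau>) (b + \<beta> * \<tau>)) has_vector_derivative
            (pd_t F s (a + \<tau>) (b + \<beta> * \<tau>) + \<beta> *\<^sub>R pd_x F s (a + \<tau>) (b + \<beta> * \<tau>))) (at \<tau>)"
proof -
  define t where "t = a + \<tau>"
  define x where "x = b + \<beta> * \<tau>"
  define U where "U = (\<lambda>(s::real,t::real,x::real). F s t x)"
  obtain D where D: "(U has_derivative D) (at (s,t,x))"
    using smooth3_diff[OF sm, of "(s,t,x)"] unfolding U_def differentiable_def by blast
  have lin: "linear D" using D by (simp add: has_derivative_linear)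
  have comp: "((\<lambda>h. U (g h)) has_vector_derivative D v) (at h0)"
    if g: "(g has_derivative (\<lambda>h. h *\<^sub>R v)) (at h0)" "g h0 = (s,t,x)" for g :: "real \<Rightarrow> real \<times> real \<times> real" and v h0
  proof -
    have "(U \<circ> g has_derivative D \<circ> (\<lambda>h. h *\<^sub>R v)) (at h0)"
      by (rule diff_chain_at[OF g(1)]) (use D g(2) in simp)
    then show ?thesis unfolding has_vector_derivative_def o_def
      by (simp add: linear_scale[OF lin])
  qed
  have "((\<lambda>\<tau>'. U (s, \<tau>', x)) has_vector_derivative D (0,1,0)) (at t)"
    by (rule comp) (auto intro!: derivative_eq_intros simp: fun_eq_iff)
  then have Dt: "D (0,1,0) = pd_t F s t x"
    using smooth3_dt[OF sm, of s x t] unfolding U_def by (simp add: vector_derivative_unique_at)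
  have "((\<lambda>\<xi>. U (s, t, \<xi>)) has_vector_derivative D (0,0,1)) (at x)"
    by (rule comp) (auto intro!: derivative_eq_intros simp: fun_eq_iff)
  then have Dx: "D (0,0,1) = pd_x F s t x"
    using smooth3_dx[OF sm, of s t x] unfolding U_def by (simp add: vector_derivative_unique_at)
  have "((\<lambda>\<tau>'. U (s, a + \<tau>', b + \<beta> * \<tau>')) has_vector_derivative D (0,1,\<beta>)) (at \<tau>)"
    by (rule comp) (auto intro!: derivative_eq_intros simp: fun_eq_iff t_def x_def)
  moreover have "D (0,1,\<beta>) = D (0,1,0) + \<beta> *\<^sub>R D (0,0,1)"
  proof -
    have "(0::real,1::real,\<beta>) = (0,1,0) + \<beta> *\<^sub>R (0,0,1)" by simp
    then show ?thesis by (metis linear_add[OF lin] linear_scale[OF lin])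
  qed
  ultimately show ?thesis unfolding U_def Dt Dx t_def x_def by simp
qed

lemma two_periods_const:
  fixes \<phi> :: "real \<Rightarrow> real"
  assumes cont: "continuous_on UNIV \<phi>" and p1: "\<And>y. \<phi> (y + 2*pi) = \<phi> y"
    and p2: "\<And>y. \<phi> (y + T) = \<phi> y" and irr: "T / (2*pi) \<notin> \<rat>"
  shows "\<phi> (y + \<delta>) = \<phi> y"
proof (rule ccontr)
  assume ne: "\<phi> (y + \<delta>) \<noteq> \<phi> y"
  define \<epsilon> where "\<epsilon> = dist (\<phi> y) (\<phi> (y + \<delta>))"
  have \<epsilon>: "\<epsilon> > 0" using ne by (simp add: \<epsilon>_def)
  obtain d where d: "d > 0" "\<And>z. dist z (y + \<delta>) < d \<Longrightarrow> dist (\<phi> z) (\<phi> (y + \<delta>)) < \<epsilon>"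
    using cont \<epsilon> unfolding continuous_on_iff by (metis UNIV_I)
  have "d / (2*pi) > 0" using d pi_gt_zero by simp
  then obtain h k :: int where hk: "\<bar>of_int k * (T / (2*pi)) - of_int h - \<delta> / (2*pi)\<bar> < d / (2*pi)"
    using sequence_of_fractional_parts_is_dense[OF irr] by metis
  have "\<bar>of_int k * (T / (2*pi)) - of_int h - \<delta> / (2*pi)\<bar> * (2*pi) = \<bar>of_int k * T - of_int h * (2*pi) - \<delta>\<bar>"
  proof -
    have "(of_int k * (T / (2*pi)) - of_int h - \<delta> / (2*pi)) * (2*pi) = of_int k * T - of_int h * (2*pi) - \<delta>"
      using pi_gt_zero by (simp add: field_simps)
    moreover have "\<bar>2*pi\<bar> = 2*pi" using pi_gt_zero by simp
    ultimately show ?thesis by (metis abs_mult)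
  qed
  with hk have close: "\<bar>of_int k * T - of_int h * (2*pi) - \<delta>\<bar> < d"
    using pi_gt_zero by (simp add: field_simps)
  define z where "z = (y + of_int k * T) + of_int (-h) * (2*pi)"
  have "\<phi> z = \<phi> (y + of_int k * T)" unfolding z_def by (rule per_shift1[of \<phi>, OF p1])
  also have "\<dots> = \<phi> y" by (rule per_shift1[of \<phi>, OF p2])
  finally have phz: "\<phi> z = \<phi> y" .
  have "dist z (y + \<delta>) < d" using close unfolding z_def dist_real_def by (simp add: algebra_simps)
  from d(2)[OF this] phz show False by (simp add: \<epsilon>_def)
qed

lemma line_const:
  assumes sm: "smooth3 Z" and h: "\<And>t x. e \<bullet> (pd_t Z s t x + \<beta> *\<^sub>R pd_x Z s t x) = 0"
  shows "e \<bullet> Z s (a + \<tau>) (b + \<beta> * \<tau>) = e \<bullet> Z s a b"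
proof -
  have "((\<lambda>\<tau>. e \<bullet> Z s (a + \<tau>) (b + \<beta> * \<tau>)) has_field_derivative 0) (at \<tau>' within UNIV)" for \<tau>'
    using hvd_inner[OF has_vector_derivative_const[of e] dir_deriv[OF sm, of s a b \<beta> \<tau>']] h
    unfolding has_real_derivative_iff_has_vector_derivative by simp
  from has_field_derivative_zero_constant[OF convex_UNIV this]
  obtain c where "\<forall>\<tau>. e \<bullet> Z s (a + \<tau>) (b + \<beta> * \<tau>) = c" by blast
  from this[rule_format, of \<tau>] this[rule_format, of 0] show ?thesis by simp
qed

lemma P2_key:
  assumes T: "T > 0" and sm: "smooth3 Z" and pt: "pert T Z" and px: "perx Z"
    and irr: "T / (2*pi) \<notin> \<rat>" and b: "\<beta> = 1 \<or> \<beta> = -1"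
    and h: "\<And>t x. e \<bullet> (pd_t Z s t x + \<beta> *\<^sub>R pd_x Z s t x) = 0"
    and mean: "integral (cbox (0,0) (T,2*pi)) (\<lambda>p. Z s (fst p) (snd p)) = 0"
  shows "e \<bullet> Z s t x = 0"
proof -
  define \<phi> where "\<phi> y = e \<bullet> Z s 0 y" for y
  have q: "e \<bullet> Z s t x = \<phi> (x - \<beta> * t)" for t x
    using line_const[OF sm h, of 0 t "x - \<beta> * t"] unfolding \<phi>_def by simp
  have p1: "\<phi> (y + 2*pi) = \<phi> y" for y
    using px unfolding perx_def \<phi>_def by simp
  have p2': "\<phi> (y - \<beta> * T) = \<phi> y" for y
  proof -
    have "\<phi> (y - \<beta> * T) = e \<bullet> Z s T y" using q[of T y] by simp
    also have "\<dots> = e \<bullet> Z s (0 + T) y" by simp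
    also have "\<dots> = \<phi> y" using pt unfolding pert_def \<phi>_def by metis
    finally show ?thesis .
  qed
  have p2: "\<phi> (y + T) = \<phi> y" for y
    using b
  proof
    assume "\<beta> = 1" then show ?thesis using p2'[of "y + T"] by simp
  next
    assume "\<beta> = -1" then show ?thesis using p2'[of y] by simp
  qed
  have cont: "continuous_on UNIV \<phi>"
    unfolding \<phi>_def by (intro continuous_on_inner continuous_on_const cont_1x sm)
  have const: "e \<bullet> Z s t x = \<phi> 0" for t x
    using two_periods_const[OF cont p1 p2 irr, of 0 "x - \<beta> * t"] q by simp
  have i: "(\<lambda>p. Z s (fst p) (snd p)) integrable_on cbox (0,0) (T,2*pi)"
    by (rule intg_cont[OF cont_sm2[OF sm]])
  have "integral (cbox (0,0) (T,2*pi)) (\<lambda>p. e \<bullet> Z s (fst p) (snd p)) = e \<bullet> 0"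
    using integral_linear[OF i bounded_linear_inner_right[of e]] mean by (simp add: o_def)
  moreover have "integral (cbox (0,0) (T,2*pi)) (\<lambda>p. e \<bullet> Z s (fst p) (snd p)) = (T * (2*pi)) * \<phi> 0"
    using const T pi_gt_zero by (simp add: content_Pair)
  ultimately have "\<phi> 0 = 0" using T pi_gt_zero by simp
  then show ?thesis using const by simp
qed

lemma P2:
  assumes T: "T > 0" and sm: "smooth3 Z" and pt: "pert T Z" and px: "perx Z"
    and irr: "T / (2*pi) \<notin> \<rat>"
    and hA: "\<And>t x. M1 *v pd_t Z s t x + M2 *v pd_x Z s t x = 0"
    and mean: "integral (cbox (0,0) (T,2*pi)) (\<lambda>p. Z s (fst p) (snd p)) = 0"
  shows "Z s t x = 0"
proof -
  have c: "pd_t Z s t x $ 1 = pd_x Z s t x $ 4 \<and> pd_t Z s t x $ 2 = pd_x Z s t x $ 3 \<and>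
     pd_t Z s t x $ 3 = pd_x Z s t x $ 2 \<and> pd_t Z s t x $ 4 = pd_x Z s t x $ 1" for t x
    using hA[of t x] unfolding M1v M2v by (simp add: vec_eq_iff forall_4 vec4_comp)
  let ?e1 = "vector [1,0,0,1] :: real^4"
  let ?e2 = "vector [0,1,1,0] :: real^4"
  let ?e3 = "vector [1,0,0,-1] :: real^4"
  let ?e4 = "vector [0,1,-1,0] :: real^4"
  have 1: "?e1 \<bullet> Z s t x = 0"
    by (rule P2_key[OF T sm pt px irr _ _ mean, of "-1"]) (use c in \<open>auto simp: inner4 vec4_comp\<close>)
  have 2: "?e2 \<bullet> Z s t x = 0"
    by (rule P2_key[OF T sm pt px irr _ _ mean, of "-1"]) (use c in \<open>auto simp: inner4 vec4_comp\<close>)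
  have 3: "?e3 \<bullet> Z s t x = 0"
    by (rule P2_key[OF T sm pt px irr _ _ mean, of "1"]) (use c in \<open>auto simp: inner4 vec4_comp\<close>)
  have 4: "?e4 \<bullet> Z s t x = 0"
    by (rule P2_key[OF T sm pt px irr _ _ mean, of "1"]) (use c in \<open>auto simp: inner4 vec4_comp\<close>)
  from 1 2 3 4 show ?thesis
    by (simp add: inner4 vec4_comp vec_eq_iff forall_4)
qed

lemma irr_of_measure:
  assumes "irrationality_measure r = 2"
  shows "r \<notin> \<rat>"
proof
  assume "r \<in> \<rat>"
  then obtain a b :: int where ab: "b > 0" "r = of_int a / of_int b"
    by (metis Rats_cases')
  have E: "{ereal \<rho> | \<rho>. \<exists>c>0. \<forall>p::int. \<forall>q::int. q > 0 \<longrightarrow>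
            c / (real_of_int q) powr \<rho> < \<bar>r - real_of_int p / real_of_int q\<bar>} = {}"
  proof (safe)
    fix \<rho> c assume c: "(c::real) > 0" and H: "\<forall>p::int. \<forall>q::int. q > 0 \<longrightarrow>
            c / (real_of_int q) powr \<rho> < \<bar>r - real_of_int p / real_of_int q\<bar>"
    from H[rule_format, of b a] ab have "c / (real_of_int b) powr \<rho> < 0" by simp
    moreover have "c / (real_of_int b) powr \<rho> > 0" using c ab by simp
    ultimately show "ereal \<rho> \<in> {}" by simp
  qed
  have "irrationality_measure r = Inf {}" unfolding irrationality_measure_def E ..
  then have "irrationality_measure r = \<infinity>" by (simp add: top_ereal_def)
  with assms show False by simp
qed

lemma iter_zero:
  "(pd_x ^^ n) (\<lambda>s t x. 0) = (\<lambda>s t x. 0)" "(pd_t ^^ n) (\<lambda>s t x. 0) = (\<lambda>s t x. 0)"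
  by (induction n) (simp_all add: pd_x_def pd_t_def)

theorem lemma3p2:
  fixes T :: real and Z :: "real \<Rightarrow> real \<Rightarrow> real \<Rightarrow> real^4"
  assumes T_pos: "T > 0"
    and irr: "irrationality_measure (2 * pi / T) = 2"
    and per_t: "\<And>s t x. Z s (t + T) x = Z s t x"
    and per_x: "\<And>s t x. Z s t (x + 2 * pi) = Z s t x"
    and smooth: "smooth3 Z"
    and eqn: "\<And>s t x. pd_s Z s t x + M1 *v pd_t Z s t x + M2 *v pd_x Z s t x = 0"
    and energy: "(\<integral>\<^sup>+ s. (\<integral>\<^sup>+ t. (\<integral>\<^sup>+ x.
                    ennreal ((norm (pd_s Z s t x))\<^sup>2) * indicator {0..2 * pi} x \<partial>lborel)
                    * indicator {0..T} t \<partial>lborel) \<partial>lborel) < \<infinity>"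
    and mean0: "\<And>s. integral (cbox (0, 0) (T, 2 * pi)) (\<lambda>(t, x). Z s t x) = 0"
  shows "\<forall>a b::nat. \<forall>\<epsilon>>0. \<exists>S. \<forall>s\<ge>S. \<forall>t x.
           norm (((pd_t ^^ a) ((pd_x ^^ b) Z)) s t x) < \<epsilon>"
proof -
  have pt: "pert T Z" using per_t by (simp add: pert_def)
  have px: "perx Z" using per_x by (simp add: perx_def)
  have e: "eqD Z" using eqn by (simp add: eqD_def)
  have irr2: "T / (2*pi) \<notin> \<rat>"
  proof
    assume "T / (2*pi) \<in> \<rat>"
    then have "inverse (T / (2*pi)) \<in> \<rat>" by (rule Rats_inverse)
    then have "2 * pi / T \<in> \<rat>" by (simp add: inverse_eq_divide)
    with irr_of_measure[OF irr] show False by simp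
  qed
  have ds0: "pd_s Z s t x = 0" for s t x
    by (rule P1[OF T_pos smooth pt px e energy])
  have hA: "M1 *v pd_t Z s t x + M2 *v pd_x Z s t x = 0" for s t x
    using eqn[of s t x] ds0[of s t x] by simp
  have m: "integral (cbox (0,0) (T,2*pi)) (\<lambda>p. Z s (fst p) (snd p)) = 0" for s
    using mean0[of s] by (simp add: case_prod_beta')
  have "Z s t x = 0" for s t x
    by (rule P2[OF T_pos smooth pt px irr2 hA m])
  then have Z0: "Z = (\<lambda>s t x. 0)" by (intro ext)
  show ?thesis unfolding Z0 iter_zero by simp
qed

end
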